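(* Let $n_b\ge1$, $\alpha>0$, $l_0>0$, $\gamma\in[0,1)$ and $p_{in},p_{out}\in[0,1]$ satisfy either ($p_{in}>p_{out}$ and $1-p_{in}>p_{out}$) or ($p_{out}>p_{in}$ and $1-p_{out}>p_{in}$). Consider a random network on $2n_b$ nodes split into blocks $\mathcal B_1,\mathcal B_2$ of size $n_b$, with $\mathbf W=\alpha\mathbf A$, where $\mathbf A$ is a symmetric $0/1$ matrix whose entries $A_{ij}$, $i\le j$ (diagonal included), are independent Bernoulli with parameter $p_{in}$ if $v_i,v_j$ are in the same block and $p_{out}$ otherwise. Run the GIP model with $l_{j,0}=h_{j,0}=l_0$ and $l_{j,1}=2\alpha l_0$ for all $v_j$, from the initial state $x_i(0)=l_0$ for $v_i\in\mathcal A_0$ and $0$ otherwise. Consider (i) $\mathcal A_0=\{v_{i_1},v_{i_2},v_{i_3},v_{i_4}\}\subset\mathcal B_1$ and (ii) $\mathcal A_0=\{v_{j_1},v_{j_2},v_{j_3},v_{j_4}\}$ with $v_{j_1},v_{j_2}\in\mathcal B_1$, $v_{j_3},v_{j_4}\in\mathcal B_2$. For each choice, let $\Delta$ be the increase of $\mathbb E[\sum_j(1-\gamma)x_j(1)]$ (expectation over the random network) when $h_{j,1}$ is raised from $h_{j,1}=2\alpha l_0$ to $h_{j,1}=4\alpha l_0$ for all $v_j$. Then $\Delta$ for (i) is strictly larger than $\Delta$ for (ii).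
   Context: The general information propagation (GIP) model on a network with weighted adjacency matrix $\mathbf W=(W_{ij})$, $W_{ij}\ge0$, with lower bounds $\{l_{j,t}\}$ and upper bounds $\{h_{j,t}\}$ ($0\le l_{j,t}\le h_{j,t}$, $l_{j,0}>0$) is the dynamics $x_j(t)=f_{j,t}(\sum_i W_{ij}x_i(t-1))$ for $t>0$, where $f_{j,t}(x)=0$ if $x<l_{j,t}$, $f_{j,t}(x)=x$ if $l_{j,t}\le x<h_{j,t}$, $f_{j,t}(x)=h_{j,t}$ if $x\ge h_{j,t}$, and initial values $x_j(0)\in\{0\}\cup[l_{j,0},h_{j,0}]$. *)

theory Defs
  imports "HOL-Probability.Probability"
begin

definition gip_f :: "real \<Rightarrow> real \<Rightarrow> real \<Rightarrow> real" where
  "gip_f l h x = (if x < l then 0 else if x < h then x else h)"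

text \<open>GIP dynamics on nodes 0..N-1: W i j is the weight W_ij, l j t and h j t are the
  lower/upper bounds l_{j,t}, h_{j,t}, x0 is the initial state; gip ... t j = x_j(t).\<close>
fun gip :: "nat \<Rightarrow> (nat \<Rightarrow> nat \<Rightarrow> real) \<Rightarrow> (nat \<Rightarrow> nat \<Rightarrow> real) \<Rightarrow> (nat \<Rightarrow> nat \<Rightarrow> real)
            \<Rightarrow> (nat \<Rightarrow> real) \<Rightarrow> nat \<Rightarrow> nat \<Rightarrow> real" where
  "gip N W l h x0 0 = x0"
| "gip N W l h x0 (Suc t) =
     (\<lambda>j. gip_f (l j (Suc t)) (h j (Suc t)) (\<Sum>i<N. W i j * gip N W l h x0 t i))"

text \<open>Two blocks: B1 = {0..<nb}, B2 = {nb..<2nb}.\<close>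
definition same_block :: "nat \<Rightarrow> nat \<Rightarrow> nat \<Rightarrow> bool" where
  "same_block nb i j = ((i < nb) = (j < nb))"

definition sbm :: "nat \<Rightarrow> real \<Rightarrow> real \<Rightarrow> (nat \<times> nat \<Rightarrow> bool) pmf" where
  "sbm nb pin pout = Pi_pmf {(i, j). i \<le> j \<and> j < 2 * nb} False
     (\<lambda>(i, j). bernoulli_pmf (if same_block nb i j then pin else pout))"

definition adj :: "(nat \<times> nat \<Rightarrow> bool) \<Rightarrow> nat \<Rightarrow> nat \<Rightarrow> real" where
  "adj E i j = (if E (min i j, max i j) then 1 else 0)"

text \<open>Expected value of sum_j (1-gamma) x_j(1), with W = alpha A, l_{j,0}=h_{j,0}=l0,
  l_{j,1} = 2 alpha l0, h_{j,1} = H, initial state l0 on A0 and 0 elsewhere.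
  (Bounds for t \<ge> 2 are irrelevant for x(1); they are set equal to those at t = 1.)\<close>
definition exp_activity ::
  "nat \<Rightarrow> real \<Rightarrow> real \<Rightarrow> real \<Rightarrow> real \<Rightarrow> real \<Rightarrow> real \<Rightarrow> nat set \<Rightarrow> real" where
  "exp_activity nb pin pout \<alpha> l0 \<gamma> H A0 =
     measure_pmf.expectation (sbm nb pin pout)
       (\<lambda>E. \<Sum>j<2 * nb. (1 - \<gamma>) *
          gip (2 * nb) (\<lambda>i j. \<alpha> * adj E i j)
              (\<lambda>j t. if t = 0 then l0 else 2 * \<alpha> * l0)
              (\<lambda>j t. if t = 0 then l0 else H)
              (\<lambda>i. if i \<in> A0 then l0 else 0) 1 j)"

definition gip_delta ::
  "nat \<Rightarrow> real \<Rightarrow> real \<Rightarrow> real \<Rightarrow> real \<Rightarrow> real \<Rightarrow> nat set \<Rightarrow> real" where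
  "gip_delta nb pin pout \<alpha> l0 \<gamma> A0 =
     exp_activity nb pin pout \<alpha> l0 \<gamma> (4 * \<alpha> * l0) A0
     - exp_activity nb pin pout \<alpha> l0 \<gamma> (2 * \<alpha> * l0) A0"

end

theory Submission imports Defs begin


lemma expect_card:
  fixes q :: "'a \<Rightarrow> real" and G :: "nat \<Rightarrow> real"
  assumes fin: "finite I" and sub: "Sa \<subseteq> I" "Sb \<subseteq> I" and disj: "Sa \<inter> Sb = {}"
    and qa: "\<forall>e\<in>Sa. q e = pa" and qb: "\<forall>e\<in>Sb. q e = pb"
    and pa: "0 \<le> pa" "pa \<le> 1" and pb: "0 \<le> pb" "pb \<le> 1"
  shows "measure_pmf.expectation (Pi_pmf I False (\<lambda>e. bernoulli_pmf (q e)))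
            (\<lambda>E. G (card {e\<in>Sa\<union>Sb. E e}))
     = (\<Sum>x\<le>card Sa. \<Sum>y\<le>card Sb. pmf (binomial_pmf (card Sa) pa) x
           * pmf (binomial_pmf (card Sb) pb) y * G (x+y))"
proof -
  let ?Q = "\<lambda>e. bernoulli_pmf (q e)"
  let ?S = "Sa \<union> Sb"
  have finS: "finite Sa" "finite Sb" using fin sub finite_subset by auto
  have "Pi_pmf ?S False ?Q = map_pmf (\<lambda>f x. if x \<in> ?S then f x else False) (Pi_pmf I False ?Q)"
    by (rule Pi_pmf_subset) (use fin sub in auto)
  hence "measure_pmf.expectation (Pi_pmf ?S False ?Q) (\<lambda>E. G (card {e\<in>?S. E e}))
       = measure_pmf.expectation (Pi_pmf I False ?Q) (\<lambda>E. G (card {e\<in>?S. E e}))"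
    by (simp only: integral_map_pmf) (intro Bochner_Integration.integral_cong refl arg_cong[where f=G] arg_cong[where f=card]; auto)
  also have "Pi_pmf ?S False ?Q = map_pmf (\<lambda>(f,g) x. if x \<in> Sa then f x else g x)
             (pair_pmf (Pi_pmf Sa False ?Q) (Pi_pmf Sb False ?Q))"
    using Pi_pmf_union[OF finS disj] .
  finally have 1: "measure_pmf.expectation (Pi_pmf I False ?Q) (\<lambda>E. G (card {e\<in>?S. E e}))
     = measure_pmf.expectation (pair_pmf (Pi_pmf Sa False ?Q) (Pi_pmf Sb False ?Q))
        (\<lambda>(f,g). G (card {e\<in>Sa. f e} + card {e\<in>Sb. g e}))"
  proof -
    assume h: "measure_pmf.expectation (map_pmf (\<lambda>(f,g) x. if x \<in> Sa then f x else g x)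
             (pair_pmf (Pi_pmf Sa False ?Q) (Pi_pmf Sb False ?Q))) (\<lambda>E. G (card {e\<in>?S. E e}))
       = measure_pmf.expectation (Pi_pmf I False ?Q) (\<lambda>E. G (card {e\<in>?S. E e}))"
    have c: "card {e\<in>?S. (if e \<in> Sa then f e else g e)} = card {e\<in>Sa. f e} + card {e\<in>Sb. g e}" for f g
    proof -
      have "{e\<in>?S. (if e \<in> Sa then f e else g e)} = {e\<in>Sa. f e} \<union> {e\<in>Sb. g e}"
        using disj by auto
      thus ?thesis using finS disj by (simp add: card_Un_disjoint disjoint_iff)
    qed
    show ?thesis unfolding h[symmetric] integral_map_pmf
      apply (intro Bochner_Integration.integral_cong refl)
      subgoal for x by (cases x) (simp only: prod.case c)
      done
  qed
  have "Pi_pmf Sa False ?Q = Pi_pmf Sa False (\<lambda>_. bernoulli_pmf pa)"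
    by (rule Pi_pmf_cong) (use qa in auto)
  moreover have "Pi_pmf Sb False ?Q = Pi_pmf Sb False (\<lambda>_. bernoulli_pmf pb)"
    by (rule Pi_pmf_cong) (use qb in auto)
  ultimately have 2: "measure_pmf.expectation (pair_pmf (Pi_pmf Sa False ?Q) (Pi_pmf Sb False ?Q))
        (\<lambda>(f,g). G (card {e\<in>Sa. f e} + card {e\<in>Sb. g e}))
      = measure_pmf.expectation (map_pmf (\<lambda>(f, g). (card {e\<in>Sa. f e}, card {e\<in>Sb. g e}))
           (pair_pmf (Pi_pmf Sa False (\<lambda>_. bernoulli_pmf pa)) (Pi_pmf Sb False (\<lambda>_. bernoulli_pmf pb))))
        (\<lambda>(x,y). G (x+y))"
    by (simp add: case_prod_unfold)
  have 3: "map_pmf (\<lambda>(f, g). (card {e\<in>Sa. f e}, card {e\<in>Sb. g e}))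
           (pair_pmf (Pi_pmf Sa False (\<lambda>_. bernoulli_pmf pa)) (Pi_pmf Sb False (\<lambda>_. bernoulli_pmf pb)))
       = pair_pmf (binomial_pmf (card Sa) pa) (binomial_pmf (card Sb) pb)"
    using binomial_pmf_altdef'[OF finS(1) refl, of pa False] binomial_pmf_altdef'[OF finS(2) refl, of pb False]
      pa pb by (simp add: map_pair)
  have 4: "measure_pmf.expectation (pair_pmf (binomial_pmf (card Sa) pa) (binomial_pmf (card Sb) pb))
        (\<lambda>(x,y). G (x+y)) = (\<Sum>z\<in>{..card Sa} \<times> {..card Sb}. (case z of (x,y) \<Rightarrow> G (x+y)) *
           pmf (pair_pmf (binomial_pmf (card Sa) pa) (binomial_pmf (card Sb) pb)) z)"
    apply (rule integral_measure_pmf_real)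
    using pa pb by (auto simp: set_pmf_binomial_eq split: if_splits)
  show ?thesis
    unfolding 1 2 3 4 sum.cartesian_product by (intro sum.cong refl) (auto simp: pmf_pair)
qed

definition pr :: "nat \<Rightarrow> nat \<Rightarrow> nat \<times> nat" where
  "pr j a = (min a j, max a j)"

lemma inj_pr: "inj (pr j)"
  by (rule injI) (auto simp: pr_def min_def max_def split: if_splits)

lemma gip1:
  assumes fin: "finite A0" and sub: "A0 \<subseteq> {..<2*nb}"
  shows "gip (2 * nb) (\<lambda>i j. \<alpha> * adj E i j)
              (\<lambda>j t. if t = 0 then l0 else 2 * \<alpha> * l0)
              (\<lambda>j t. if t = 0 then l0 else H)
              (\<lambda>i. if i \<in> A0 then l0 else 0) 1 j
       = gip_f (2 * \<alpha> * l0) H (\<alpha> * l0 * real (card {e \<in> pr j ` A0. E e}))"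
proof -
  have "(\<Sum>i<2*nb. \<alpha> * adj E i j * (if i \<in> A0 then l0 else 0))
      = (\<Sum>i\<in>A0. \<alpha> * adj E i j * l0)"
    by (rule sum.mono_neutral_cong_right) (use sub in auto)
  also have "\<dots> = \<alpha> * l0 * (\<Sum>i\<in>A0. (if E (pr j i) then 1 else 0))"
    by (simp add: sum_distrib_left adj_def pr_def mult_ac)
  also have "(\<Sum>i\<in>A0. (if E (pr j i) then 1 else 0)) = real (card {i\<in>A0. E (pr j i)})"
    using sum.inter_filter[OF fin, of "\<lambda>_. (1::real)" "\<lambda>i. E (pr j i)"] by simp
  also have "card {i\<in>A0. E (pr j i)} = card (pr j ` {i\<in>A0. E (pr j i)})"
    using inj_pr by (simp add: card_image inj_on_def inj_def)
  also have "pr j ` {i\<in>A0. E (pr j i)} = {e \<in> pr j ` A0. E e}" by auto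
  finally show ?thesis unfolding One_nat_def gip.simps by simp
qed

definition D :: "real \<Rightarrow> nat \<Rightarrow> real" where
  "D c k = gip_f (2 * c) (4 * c) (c * real k) - gip_f (2 * c) (2 * c) (c * real k)"

lemma D_vals: assumes "c > 0"
  shows "D c 0 = 0" "D c 1 = 0" "D c 2 = 0" "D c 3 = c" "D c 4 = 2 * c"
  using assms by (auto simp: D_def gip_f_def)

lemma finite_sbm: "finite (set_pmf (sbm nb pin pout))"
proof -
  have "finite {(i, j). i \<le> j \<and> j < 2 * nb}"
    by (rule finite_subset[of _ "{..<2*nb} \<times> {..<2*nb}"]) auto
  thus ?thesis unfolding sbm_def
    by (intro finite_subset[OF set_Pi_pmf_subset']) (auto intro!: finite_PiE_dflt)
qed

definition T :: "real \<Rightarrow> real \<Rightarrow> (nat \<Rightarrow> real) \<Rightarrow> nat \<Rightarrow> nat \<Rightarrow> real" where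
  "T pin pout G m n = (\<Sum>x\<le>m. \<Sum>y\<le>n. pmf (binomial_pmf m pin) x
           * pmf (binomial_pmf n pout) y * G (x+y))"

lemma exp_D:
  assumes fin: "finite A0" and sub: "A0 \<subseteq> {..<2*nb}" and j: "j < 2*nb"
    and p: "0 \<le> pin" "pin \<le> 1" "0 \<le> pout" "pout \<le> 1"
  shows "measure_pmf.expectation (sbm nb pin pout) (\<lambda>E. G (card {e \<in> pr j ` A0. E e}))
     = T pin pout G (card {a\<in>A0. same_block nb a j}) (card {a\<in>A0. \<not> same_block nb a j})"
proof -
  let ?I = "{(i, j). i \<le> j \<and> j < 2 * nb}"
  define q where "q = (\<lambda>e::nat\<times>nat. if same_block nb (fst e) (snd e) then pin else pout)"
  have s: "sbm nb pin pout = Pi_pmf ?I False (\<lambda>e. bernoulli_pmf (q e))"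
    unfolding sbm_def q_def by (intro Pi_pmf_cong) (auto split: prod.splits)
  have finI: "finite ?I"
    by (rule finite_subset[of _ "{..<2*nb} \<times> {..<2*nb}"]) auto
  define Sa where "Sa = pr j ` {a\<in>A0. same_block nb a j}"
  define Sb where "Sb = pr j ` {a\<in>A0. \<not> same_block nb a j}"
  have U: "pr j ` A0 = Sa \<union> Sb" unfolding Sa_def Sb_def by auto
  have sbpr: "same_block nb (fst (pr j a)) (snd (pr j a)) = same_block nb a j" for a
    by (auto simp: pr_def same_block_def min_def max_def)
  have "measure_pmf.expectation (Pi_pmf ?I False (\<lambda>e. bernoulli_pmf (q e)))
            (\<lambda>E. G (card {e\<in>Sa\<union>Sb. E e}))
     = (\<Sum>x\<le>card Sa. \<Sum>y\<le>card Sb. pmf (binomial_pmf (card Sa) pin) x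
           * pmf (binomial_pmf (card Sb) pout) y * G (x+y))"
  proof (rule expect_card[OF finI])
    show "Sa \<subseteq> ?I" "Sb \<subseteq> ?I" using sub j unfolding Sa_def Sb_def
      by (auto simp: pr_def)
    show "Sa \<inter> Sb = {}" unfolding Sa_def Sb_def using inj_pr[of j]
      by (auto simp: inj_def) metis
    show "\<forall>e\<in>Sa. q e = pin" "\<forall>e\<in>Sb. q e = pout" unfolding Sa_def Sb_def q_def
      using sbpr by auto
  qed (use p in auto)
  moreover have "card Sa = card {a\<in>A0. same_block nb a j}" "card Sb = card {a\<in>A0. \<not> same_block nb a j}"
    unfolding Sa_def Sb_def using inj_pr[of j] by (simp_all add: card_image inj_on_def inj_def)
  ultimately show ?thesis unfolding s U T_def by simp
qed

lemma delta_formula: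
  assumes fin: "finite A0" and sub: "A0 \<subseteq> {..<2*nb}"
    and p: "0 \<le> pin" "pin \<le> 1" "0 \<le> pout" "pout \<le> 1"
  shows "gip_delta nb pin pout \<alpha> l0 \<gamma> A0 = (\<Sum>j<2*nb. (1 - \<gamma>) *
     T pin pout (D (\<alpha> * l0)) (card {a\<in>A0. same_block nb a j}) (card {a\<in>A0. \<not> same_block nb a j}))"
proof -
  have int: "integrable (measure_pmf (sbm nb pin pout)) f" for f :: "_ \<Rightarrow> real"
    by (rule integrable_measure_pmf_finite[OF finite_sbm])
  have "gip_delta nb pin pout \<alpha> l0 \<gamma> A0 = measure_pmf.expectation (sbm nb pin pout)
     (\<lambda>E. \<Sum>j<2*nb. (1 - \<gamma>) * D (\<alpha> * l0) (card {e \<in> pr j ` A0. E e}))"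
    unfolding gip_delta_def exp_activity_def gip1[OF fin sub]
    by (subst Bochner_Integration.integral_diff[OF int int, symmetric])
       (simp add: D_def sum_subtractf[symmetric] right_diff_distrib mult.assoc)
  also have "\<dots> = (\<Sum>j<2*nb. (1 - \<gamma>) * measure_pmf.expectation (sbm nb pin pout)
                     (\<lambda>E. D (\<alpha> * l0) (card {e \<in> pr j ` A0. E e})))"
    by (simp add: Bochner_Integration.integral_sum[OF int] int)
  also have "\<dots> = (\<Sum>j<2*nb. (1 - \<gamma>) *
     T pin pout (D (\<alpha> * l0)) (card {a\<in>A0. same_block nb a j}) (card {a\<in>A0. \<not> same_block nb a j}))"
    by (intro sum.cong refl) (simp add: exp_D[OF fin sub _ p])
  finally show ?thesis .
qed

lemma D_vals_Suc: assumes "c > 0"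
  shows "D c (Suc 0) = 0" "D c (Suc (Suc 0)) = 0" "D c (Suc (Suc (Suc 0))) = c"
    "D c (Suc (Suc (Suc (Suc 0)))) = 2 * c"
  using assms by (auto simp: D_def gip_f_def)

lemma T_vals:
  assumes c: "c > 0" and p: "0 \<le> p" "p \<le> 1" "0 \<le> q" "q \<le> 1"
  shows "T p q (D c) 4 0 = c*(4*p^3*(1-p) + 2*p^4)"
    "T p q (D c) 0 4 = c*(4*q^3*(1-q) + 2*q^4)"
    "T p q (D c) 2 2 = c*(2*p*(1-p)*q^2 + 2*p^2*q*(1-q) + 2*p^2*q^2)"
  using p by (simp_all add: T_def eval_nat_numeral D_vals(1)[OF c] D_vals_Suc[OF c] algebra_simps)

lemma split_sum:
  fixes f :: "nat \<Rightarrow> real"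
  shows "(\<Sum>j<2*nb. f j) = (\<Sum>j<nb. f j) + (\<Sum>j\<in>{nb..<2*nb}. f j)"
  by (simp add: lessThan_atLeast0 sum.atLeastLessThan_concat)

theorem claim3:
  fixes nb :: nat and \<alpha> l0 \<gamma> pin pout :: real
    and i1 i2 i3 i4 j1 j2 j3 j4 :: nat
  assumes "nb \<ge> 1" and "\<alpha> > 0" and "l0 > 0" and "0 \<le> \<gamma>" and "\<gamma> < 1"
    and "0 \<le> pin" and "pin \<le> 1" and "0 \<le> pout" and "pout \<le> 1"
    and "(pin > pout \<and> 1 - pin > pout) \<or> (pout > pin \<and> 1 - pout > pin)"
    and "distinct [i1, i2, i3, i4]" and "{i1, i2, i3, i4} \<subseteq> {0..<nb}"
    and "distinct [j1, j2, j3, j4]" and "{j1, j2} \<subseteq> {0..<nb}"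
    and "{j3, j4} \<subseteq> {nb..<2 * nb}"
  shows "gip_delta nb pin pout \<alpha> l0 \<gamma> {i1, i2, i3, i4}
         > gip_delta nb pin pout \<alpha> l0 \<gamma> {j1, j2, j3, j4}"
proof -
  note p = assms(6-9)
  define c where "c = \<alpha> * l0"
  have c: "c > 0" using assms(2,3) c_def by simp
  let ?A = "{i1, i2, i3, i4}" and ?B = "{j1, j2, j3, j4}"
  have cA: "card ?A = 4" using assms(11) by simp
  have cB12: "card {j1, j2} = 2" and cB34: "card {j3, j4} = 2" using assms(13) by simp_all
  have subA: "?A \<subseteq> {..<2*nb}" and subB: "?B \<subseteq> {..<2*nb}" using assms(12,14,15) by auto
  have finA: "finite ?A" and finB: "finite ?B" by simp_all
  define T40 where "T40 = T pin pout (D c) 4 0"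
  define T04 where "T04 = T pin pout (D c) 0 4"
  define T22 where "T22 = T pin pout (D c) 2 2"
  have dA: "gip_delta nb pin pout \<alpha> l0 \<gamma> ?A = real nb * ((1-\<gamma>) * T40) + real nb * ((1-\<gamma>) * T04)"
  proof -
    have "gip_delta nb pin pout \<alpha> l0 \<gamma> ?A = (\<Sum>j<nb. (1-\<gamma>) * T40) + (\<Sum>j\<in>{nb..<2*nb}. (1-\<gamma>) * T04)"
      unfolding delta_formula[OF finA subA p] split_sum c_def[symmetric]
    proof (intro arg_cong2[where f="(+)"] sum.cong refl)
      fix j assume "j \<in> {..<nb}"
      hence hh: "{a\<in>?A. same_block nb a j} = ?A" "{a\<in>?A. \<not> same_block nb a j} = {}"
        using assms(12) by (auto simp: same_block_def)
      thus "(1-\<gamma>) * T pin pout (D c) (card {a\<in>?A. same_block nb a j}) (card {a\<in>?A. \<not> same_block nb a j})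
          = (1-\<gamma>) * T40" unfolding T40_def by (simp only: hh cA card.empty)
    next
      fix j assume "j \<in> {nb..<2*nb}"
      hence hh: "{a\<in>?A. same_block nb a j} = {}" "{a\<in>?A. \<not> same_block nb a j} = ?A"
        using assms(12) by (auto simp: same_block_def)
      thus "(1-\<gamma>) * T pin pout (D c) (card {a\<in>?A. same_block nb a j}) (card {a\<in>?A. \<not> same_block nb a j})
          = (1-\<gamma>) * T04" unfolding T04_def by (simp only: hh cA card.empty)
    qed
    thus ?thesis by simp
  qed
  have dB: "gip_delta nb pin pout \<alpha> l0 \<gamma> ?B = real nb * ((1-\<gamma>) * T22) + real nb * ((1-\<gamma>) * T22)"
  proof -
    have "gip_delta nb pin pout \<alpha> l0 \<gamma> ?B = (\<Sum>j<nb. (1-\<gamma>) * T22) + (\<Sum>j\<in>{nb..<2*nb}. (1-\<gamma>) * T22)"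
      unfolding delta_formula[OF finB subB p] split_sum c_def[symmetric]
    proof (intro arg_cong2[where f="(+)"] sum.cong refl)
      fix j assume "j \<in> {..<nb}"
      hence hh: "{a\<in>?B. same_block nb a j} = {j1, j2}" "{a\<in>?B. \<not> same_block nb a j} = {j3, j4}"
        using assms(14,15) by (auto simp: same_block_def)
      thus "(1-\<gamma>) * T pin pout (D c) (card {a\<in>?B. same_block nb a j}) (card {a\<in>?B. \<not> same_block nb a j})
          = (1-\<gamma>) * T22" unfolding T22_def by (simp only: hh cB12 cB34)
    next
      fix j assume "j \<in> {nb..<2*nb}"
      hence hh: "{a\<in>?B. same_block nb a j} = {j3, j4}" "{a\<in>?B. \<not> same_block nb a j} = {j1, j2}"
        using assms(14,15) by (auto simp: same_block_def)
      thus "(1-\<gamma>) * T pin pout (D c) (card {a\<in>?B. same_block nb a j}) (card {a\<in>?B. \<not> same_block nb a j})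
          = (1-\<gamma>) * T22" unfolding T22_def by (simp only: hh cB12 cB34)
    qed
    thus ?thesis by simp
  qed
  have key: "T40 + T04 - 2 * T22 = c * (2 * (pin - pout)^2 * (pin + pout) * (2 - (pin + pout)))"
    unfolding T40_def T04_def T22_def T_vals[OF c p] by (simp add: algebra_simps power2_eq_square power3_eq_cube power4_eq_xxxx)
  have "pin \<noteq> pout" "pin + pout > 0" "pin + pout < 2" using assms(10) p by auto
  hence "c * (2 * (pin - pout)^2 * (pin + pout) * (2 - (pin + pout))) > 0"
    using c by (intro mult_pos_pos) auto
  hence "T40 + T04 > 2 * T22" using key by linarith
  moreover have "real nb * (1 - \<gamma>) > 0" using assms(1,5) by simp
  ultimately have "real nb * (1 - \<gamma>) * (T40 + T04) > real nb * (1 - \<gamma>) * (2 * T22)"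
    by (intro mult_strict_left_mono) auto
  thus ?thesis unfolding dA dB by (simp add: algebra_simps)
qed
end
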